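(* Let $0\le\lambda_2\le1$ and let $\theta:[0,1]\to[0,1]$ be non-increasing with $\theta(t)=0$ for $t\in(\lambda_2,1]$ and $\theta(\lambda_2)>0$. Define, for $q\in(0,1]$, $$g(q)=\int_{\theta^{-1}(q)}^1\int_0^t\frac1t\cdot\frac{\min\{\theta(s),q\}^t}{q}\,\mathrm ds\,\mathrm dt,$$ where $\theta^{-1}(x)=\inf\{t\in[0,1]:\theta(t)<x\}$ (with $\inf\emptyset=1$) and $0^t=0$ for $t>0$. Then $g(q)\ge g(\theta(\lambda_2))$ for every $q\in(0,\theta(\lambda_2)]$. *)

theory Defs
  imports "HOL-Analysis.Analysis"
begin

definition theta_inv :: "(real \<Rightarrow> real) \<Rightarrow> real \<Rightarrow> real" where
  "theta_inv \<theta> x = (if {t\<in>{0..1}. \<theta> t < x} = {} then 1 else Inf {t\<in>{0..1}. \<theta> t < x})"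

definition g_fun :: "(real \<Rightarrow> real) \<Rightarrow> real \<Rightarrow> real" where
  "g_fun \<theta> q = integral {theta_inv \<theta> q..1}
     (\<lambda>t. integral {0..t} (\<lambda>s. (1 / t) * (min (\<theta> s) q powr t) / q))"

end

theory Submission
  imports Defs
begin

lemma key:
  fixes \<theta> :: "real \<Rightarrow> real" and lam2 q :: real
  assumes l0: "0 \<le> lam2" and l1: "lam2 \<le> 1"
    and mono: "\<forall>s t. 0 \<le> s \<longrightarrow> s \<le> t \<longrightarrow> t \<le> 1 \<longrightarrow> \<theta> t \<le> \<theta> s"
    and z: "\<forall>t. lam2 < t \<longrightarrow> t \<le> 1 \<longrightarrow> \<theta> t = 0"
    and q0: "0 < q" and qQ: "q \<le> \<theta> lam2"
  shows "g_fun \<theta> q = integral {lam2..1} (\<lambda>t. lam2 * ((1 / t) * (q powr t) / q))"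
proof -
  have S: "{t\<in>{0..1}. \<theta> t < q} = {lam2<..1}"
  proof (intro set_eqI iffI)
    fix t assume "t \<in> {t\<in>{0..1}. \<theta> t < q}"
    then have "0 \<le> t" "t \<le> 1" "\<theta> t < q" by auto
    moreover have "t \<le> lam2 \<Longrightarrow> \<theta> lam2 \<le> \<theta> t" using mono l1 \<open>0 \<le> t\<close> by auto
    ultimately show "t \<in> {lam2<..1}" using qQ by force
  next
    fix t assume "t \<in> {lam2<..1}"
    then show "t \<in> {t\<in>{0..1}. \<theta> t < q}" using z l0 q0 by auto
  qed
  have ti: "theta_inv \<theta> q = lam2"
    unfolding theta_inv_def S using l1 by (cases "lam2 < 1") auto
  have inner: "integral {0..t} (\<lambda>s. (1 / t) * (min (\<theta> s) q powr t) / q)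
        = lam2 * ((1 / t) * (q powr t) / q)" if t: "t \<in> {lam2..1}" for t
  proof -
    let ?f = "\<lambda>s. (1 / t) * (min (\<theta> s) q powr t) / q"
    let ?c = "(1 / t) * (q powr t) / q"
    have a: "(?f has_integral (lam2 * ?c)) {0..lam2}"
    proof -
      have "((\<lambda>s. ?c) has_integral (lam2 * ?c)) {0..lam2}"
        using has_integral_const_real[of ?c 0 lam2] l0 by simp
      moreover have "?f s = ?c" if "s \<in> {0..lam2}" for s
      proof -
        have "\<theta> lam2 \<le> \<theta> s" using mono[rule_format, of s lam2] that l1 by auto
        then have "min (\<theta> s) q = q" using qQ by auto
        then show ?thesis by simp
      qed
      ultimately show ?thesis by (intro has_integral_spike_finite[of "{}" "{0..lam2}" ?f "\<lambda>s. ?c"]) auto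
    qed
    have b: "(?f has_integral 0) {lam2..t}"
    proof -
      have "((\<lambda>s. 0::real) has_integral 0) {lam2..t}" by simp
      moreover have "?f s = 0" if "s \<in> {lam2..t} - {lam2}" for s
      proof -
        have "\<theta> s = 0" using z[rule_format, of s] that t by auto
        then have "min (\<theta> s) q = 0" using q0 by auto
        then show ?thesis by simp
      qed
      ultimately show ?thesis by (intro has_integral_spike_finite[of "{lam2}" "{lam2..t}" ?f "\<lambda>s. 0"]) auto
    qed
    have "(?f has_integral (lam2 * ?c + 0)) {0..t}"
      using has_integral_combine[OF l0 _ a b] t by simp
    then have "integral {0..t} ?f = lam2 * ?c + 0" by (rule integral_unique)
    then show ?thesis by simp
  qed
  show ?thesis unfolding g_fun_def ti
    by (rule integral_cong) (rule inner)
qed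

theorem mainTheorem12:
  fixes \<theta> :: "real \<Rightarrow> real" and lam2 q :: real
  assumes "0 \<le> lam2" and "lam2 \<le> 1"
    and "\<forall>t\<in>{0..1}. \<theta> t \<in> {0..1}"
    and "\<forall>s t. 0 \<le> s \<longrightarrow> s \<le> t \<longrightarrow> t \<le> 1 \<longrightarrow> \<theta> t \<le> \<theta> s"
    and "\<forall>t. lam2 < t \<longrightarrow> t \<le> 1 \<longrightarrow> \<theta> t = 0"
    and "\<theta> lam2 > 0"
    and "0 < q" and "q \<le> \<theta> lam2"
  shows "g_fun \<theta> q \<ge> g_fun \<theta> (\<theta> lam2)"
proof -
  let ?Q = "\<theta> lam2"
  have e1: "g_fun \<theta> q = integral {lam2..1} (\<lambda>t. lam2 * ((1 / t) * (q powr t) / q))"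
    by (rule key) (use assms in \<open>simp_all\<close>)
  have e2: "g_fun \<theta> ?Q = integral {lam2..1} (\<lambda>t. lam2 * ((1 / t) * (?Q powr t) / ?Q))"
    by (rule key) (use assms in \<open>simp_all\<close>)
  show ?thesis
  proof (cases "lam2 = 0")
    case True
    then show ?thesis using e1 e2 by simp
  next
    case False
    then have lp: "lam2 > 0" using assms(1) by linarith
    have int: "(\<lambda>t. lam2 * ((1 / t) * (x powr t) / x)) integrable_on {lam2..1}" if "x > 0" for x
    proof (rule integrable_continuous_interval)
      have "\<forall>t\<in>{lam2..1}. t \<noteq> 0" using lp by auto
      then show "continuous_on {lam2..1} (\<lambda>t. lam2 * ((1 / t) * (x powr t) / x))"
        using that by (intro continuous_intros) auto
    qed
    have le: "lam2 * ((1 / t) * (?Q powr t) / ?Q) \<le> lam2 * ((1 / t) * (q powr t) / q)"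
      if "t \<in> {lam2..1}" for t
    proof -
      have "?Q powr t / ?Q = ?Q powr (t - 1)" using assms(6,7,8) by (simp add: powr_diff)
      moreover have "q powr t / q = q powr (t - 1)" using assms(6,7,8) by (simp add: powr_diff)
      moreover have "?Q powr (t - 1) \<le> q powr (t - 1)"
        using powr_mono2'[of "t - 1" q ?Q] that assms(7,8) by auto
      ultimately have "?Q powr t / ?Q \<le> q powr t / q" by simp
      moreover have "lam2 * (1/t) \<ge> 0" using that lp by auto
      ultimately have "(lam2 * (1/t)) * (?Q powr t / ?Q) \<le> (lam2 * (1/t)) * (q powr t / q)"
        by (rule mult_left_mono)
      then show ?thesis by simp
    qed
    have "0 < ?Q" using assms(6) by simp
    then show ?thesis unfolding e1 e2
      using integral_le[OF int[of ?Q] int[of q] le] assms(7) by blast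
  qed
qed

end
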